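(* Let $\mathbb K$ be a field with $\operatorname{char}(\mathbb K)=0$, let $n\ge2$, and let $\mathcal G_n$, $\mathcal N_{0,n}$ and $U_m(z_g)$ be as in the context. Suppose $f\in A_{\mathbb K}(\mathcal G_n)$ has the form $$f=\sum_{g\in\mathcal N_{0,n}}c_g1_{U_m(z_g)}\qquad\text{for some }c_g\in\mathbb K\text{ and }m\in\mathbb N.$$ Then $f$ belongs to the ideal $S_{\mathbb K}(\mathcal G_n)$ of singular functions if and only if $f$ is the zero function.
   Context: Let $X=\{\mathbf 0,\mathbf 1\}$, $X^*$ the finite words (with empty word $\varnothing$), $X^\omega$ the infinite words, $C(\eta)=\{\eta w:w\in X^\omega\}$, $\mathbf 1^m$ and $\mathbf 1^\infty$ the finite/infinite words of ones. Fix $n\ge2$, a primitive polynomial $f_n$ of degree $n$ over $\mathbb F_2$ with root $\alpha$, and $\operatorname{Tr}(\beta)=\beta+\beta^2+\dots+\beta^{2^{n-1}}\in\mathbb F_2$. $\mathfrak G_n$ is the group of automorphisms of the binary rooted tree $X^*$ generated by $a$ ($a\cdot(\mathbf 0w)=\mathbf 1w$, $a\cdot(\mathbf 1w)=\mathbf 0w$) and $\iota_n(\beta)$, $\beta\in\mathbb F_{2^n}$, where $\iota_n(\beta)\cdot(\mathbf 0w)=\mathbf 0(a^{\operatorname{Tr}(\beta)}\cdot w)$, $\iota_n(\beta)\cdot(\mathbf 1w)=\mathbf 1(\iota_n(\alpha\beta)\cdot w)$; restrictions $g|_x$ are given by $g\cdot(xw)=(g\cdot x)(g|_x\cdot w)$.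 $\mathcal N_{0,n}=\iota_n(\mathbb F_{2^n})$, $e=\iota_n(0)$. $\mathcal G_n$ is the groupoid of germs of the action of the inverse semigroup $\{(\eta,g,\mu)\}\cup\{0\}$ on $X^\omega$ with $(\eta,g,\mu):C(\mu)\to C(\eta)$, $\mu w\mapsto\eta(g\cdot w)$; germs $[(\eta,g,\mu),w]$, $w\in C(\mu)$, with $[(\eta,g,\mu),w]=[(\eta',g',\mu'),w']$ iff $w=w'$ and some finite prefix $\nu=\mu\epsilon=\mu'\epsilon'$ of $w$ satisfies $\eta(g\cdot\epsilon)=\eta'(g'\cdot\epsilon')$ and $g|_\epsilon=g'|_{\epsilon'}$; basic open bisections $\Theta(s,U)=\{[s,w]:w\in U\}$. It is a second countable ample groupoid with Hausdorff unit space $X^\omega$. For $g\in\mathfrak G_n$, $z_g=[(\varnothing,g,\varnothing),\mathbf 1^\infty]$ and $U_m(z_g)=\Theta((\varnothing,g,\varnothing),C(\mathbf 1^m))$. $A_{\mathbb K}(\mathcal G_n)$ is the Steinberg algebra: the $\mathbb K$-span of characteristic functions of compact open bisections, with convolution. A function $f\in A_{\mathbb K}(\mathcal G_n)$ is singular if $f=\sum_{i=1}^N c_i1_{S_i}$ where each $S_i$ is a relatively closed subset of some open bisection and has empty interior; equivalently, $\operatorname{supp}(f)=\{x:f(x)\neq0\}$ has empty interior. The singular functions form an ideal $S_{\mathbb K}(\mathcal G_n)$. *)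

theory Defs
  imports "HOL-Analysis.Analysis"
begin

text \<open>Letters: False = 0, True = 1. Finite words: bool list. Infinite words: nat \<Rightarrow> bool.\<close>

definition trace :: "nat \<Rightarrow> 'a::field \<Rightarrow> 'a" where
  "trace n b = (\<Sum>i<n. b ^ (2 ^ i))"

fun flipA :: "bool list \<Rightarrow> bool list" where
  "flipA [] = []"
| "flipA (x # w) = (\<not> x) # w"

fun iota :: "nat \<Rightarrow> 'a::field \<Rightarrow> 'a \<Rightarrow> bool list \<Rightarrow> bool list" where
  "iota n al b [] = []"
| "iota n al b (False # w) = False # (if trace n b = 1 then flipA w else w)"
| "iota n al b (True # w) = True # iota n al (al * b) w"

inductive_set TG :: "nat \<Rightarrow> 'a::field \<Rightarrow> (bool list \<Rightarrow> bool list) set"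
  for n :: nat and al :: "'a" where
  TG_id: "id \<in> TG n al"
| TG_a: "g \<in> TG n al \<Longrightarrow> flipA \<circ> g \<in> TG n al"
| TG_iota: "g \<in> TG n al \<Longrightarrow> iota n al b \<circ> g \<in> TG n al"
| TG_iota_inv: "g \<in> TG n al \<Longrightarrow> inv (iota n al b) \<circ> g \<in> TG n al"

definition N0 :: "nat \<Rightarrow> 'a::field \<Rightarrow> (bool list \<Rightarrow> bool list) set" where
  "N0 n al = range (iota n al)"

definition cyl :: "bool list \<Rightarrow> (nat \<Rightarrow> bool) set" where
  "cyl \<mu> = {w. \<forall>i<length \<mu>. w i = \<mu> ! i}"

definition pref :: "(nat \<Rightarrow> bool) \<Rightarrow> nat \<Rightarrow> bool list" where
  "pref w k = map w [0..<k]"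

definition cantor_open :: "(nat \<Rightarrow> bool) set \<Rightarrow> bool" where
  "cantor_open U \<longleftrightarrow> (\<forall>w\<in>U. \<exists>k. cyl (pref w k) \<subseteq> U)"

definition restr :: "(bool list \<Rightarrow> bool list) \<Rightarrow> bool list \<Rightarrow> bool list \<Rightarrow> bool list" where
  "restr g \<epsilon> = (\<lambda>v. drop (length \<epsilon>) (g (\<epsilon> @ v)))"

type_synonym trip = "bool list \<times> (bool list \<Rightarrow> bool list) \<times> bool list"
type_synonym germ = "(trip \<times> (nat \<Rightarrow> bool)) set"

definition germ_rel :: "trip \<times> (nat \<Rightarrow> bool) \<Rightarrow> trip \<times> (nat \<Rightarrow> bool) \<Rightarrow> bool" where
  "germ_rel p q = (case p of ((\<eta>, g, \<mu>), w) \<Rightarrow> case q of ((\<eta>', g', \<mu>'), w') \<Rightarrow>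
     w = w' \<and> w \<in> cyl \<mu> \<and> w' \<in> cyl \<mu>' \<and>
     (\<exists>\<epsilon> \<epsilon>'. \<mu> @ \<epsilon> = \<mu>' @ \<epsilon>' \<and> w \<in> cyl (\<mu> @ \<epsilon>) \<and>
        \<eta> @ g \<epsilon> = \<eta>' @ g' \<epsilon>' \<and> restr g \<epsilon> = restr g' \<epsilon>'))"

text \<open>The germ [s,w], as the class of all (s',w') (with s' in the inverse semigroup) equivalent to it.\<close>
definition germ :: "nat \<Rightarrow> 'a::field \<Rightarrow> trip \<Rightarrow> (nat \<Rightarrow> bool) \<Rightarrow> germ" where
  "germ n al s w = {q. fst (snd (fst q)) \<in> TG n al \<and> germ_rel (s, w) q}"

definition Theta :: "nat \<Rightarrow> 'a::field \<Rightarrow> trip \<Rightarrow> (nat \<Rightarrow> bool) set \<Rightarrow> germ set" where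
  "Theta n al s U = (\<lambda>w. germ n al s w) ` U"

definition basic_bisections :: "nat \<Rightarrow> 'a::field \<Rightarrow> germ set set" where
  "basic_bisections n al = {Theta n al (\<eta>, g, \<mu>) U | \<eta> g \<mu> U.
      g \<in> TG n al \<and> cantor_open U \<and> U \<subseteq> cyl \<mu>}"

text \<open>The groupoid of germs G_n with its topology (carrier = all germs).\<close>
definition germ_top :: "nat \<Rightarrow> 'a::field \<Rightarrow> germ topology" where
  "germ_top n al = topology_generated_by (basic_bisections n al)"

definition Uset :: "nat \<Rightarrow> 'a::field \<Rightarrow> nat \<Rightarrow> (bool list \<Rightarrow> bool list) \<Rightarrow> germ set" where
  "Uset n al m g = Theta n al ([], g, []) (cyl (replicate m True))"

definition singular :: "nat \<Rightarrow> 'a::field \<Rightarrow> (germ \<Rightarrow> 'k::zero) \<Rightarrow> bool" where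
  "singular n al f \<longleftrightarrow>
     (germ_top n al) interior_of {x \<in> topspace (germ_top n al). f x \<noteq> 0} = {}"

end

theory Submission
  imports Defs "HOL-Computational_Algebra.Polynomial"
begin


lemma ff_two: 
  assumes "CARD('F::{field,finite}) = 2 ^ n" "n \<ge> 1"
  shows "(2::'F) = 0"
proof -
  have "(\<Sum>y\<in>UNIV. y + 1) = (\<Sum>y\<in>UNIV. (y::'F))"
    by (rule sum.reindex_bij_witness[of _ "\<lambda>y. y - 1" "\<lambda>y. y + 1"]) auto
  then have "of_nat CARD('F) = (0::'F)"
    by (simp add: sum.distrib)
  then have "(2::'F) ^ n = 0" using assms by simp
  then show ?thesis by simp
qed

lemma ff_pow_card:
  fixes x :: "'F::{field,finite}"
  shows "x ^ CARD('F) = x"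
proof (cases "x = 0")
  case True then show ?thesis by (simp add: zero_power)
next
  case False
  let ?A = "UNIV - {0::'F}"
  have "(\<Prod>y\<in>?A. x * y) = (\<Prod>y\<in>?A. y)"
    by (rule prod.reindex_bij_witness[of _ "\<lambda>y. y / x" "\<lambda>y. x * y"]) (use False in auto)
  then have "x ^ card ?A * (\<Prod>y\<in>?A. y) = (\<Prod>y\<in>?A. y)"
    by (simp add: prod.distrib)
  moreover have "(\<Prod>y\<in>?A. y) \<noteq> 0" by simp
  ultimately have "x ^ card ?A = 1" by simp
  moreover obtain N where N: "CARD('F) = Suc N"
    by (metis finite_UNIV_card_ge_0 finite not0_implies_Suc not_less0 finite_class.finite_UNIV)
  moreover have "card ?A = N" using N by (simp add: card_Diff_singleton)
  ultimately have xN: "x ^ N = 1" by simp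
  have "x ^ CARD('F) = x * x ^ N" unfolding N by simp
  then show ?thesis using xN by simp
qed

lemma ff_frob:
  assumes "(2::'F::field) = 0"
  shows "((x::'F) + y) ^ (2 ^ i) = x ^ (2 ^ i) + y ^ (2 ^ i)"
proof (induction i)
  case 0 then show ?case by simp
next
  case (Suc i)
  have sq: "(a + b) ^ 2 = a ^ 2 + (b::'F) ^ 2" for a b
  proof -
    have "(a + b) ^ 2 = a ^ 2 + b ^ 2 + 2 * a * b" by (simp add: power2_eq_square algebra_simps)
    then show ?thesis using assms by simp
  qed
  have "(x + y) ^ (2 ^ Suc i) = ((x + y) ^ (2 ^ i)) ^ 2" by (simp add: power_mult[symmetric] mult.commute)
  also have "\<dots> = (x ^ (2 ^ i)) ^ 2 + (y ^ (2 ^ i)) ^ 2" using Suc sq by simp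
  also have "\<dots> = x ^ (2 ^ Suc i) + y ^ (2 ^ Suc i)" by (simp add: power_mult[symmetric] mult.commute)
  finally show ?case .
qed

lemma trace_add:
  assumes "(2::'F::field) = 0"
  shows "trace n ((x::'F) + y) = trace n x + trace n y"
  unfolding trace_def using ff_frob[OF assms] by (simp add: sum.distrib)

lemma sum_sq_char2:
  fixes k :: nat
  assumes "(2::'F::field) = 0"
  shows "(\<Sum>i<k. (a i::'F)) ^ 2 = (\<Sum>i<k. a i ^ 2)"
proof (induction k)
  case 0 then show ?case by simp
next
  case (Suc k) then show ?case using ff_frob[OF assms, of _ _ 1] by simp
qed

lemma trace_idem:
  assumes "CARD('F::{field,finite}) = 2 ^ n" "n \<ge> 1"
  shows "trace n (x::'F) = 0 \<or> trace n x = 1"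
proof -
  have two: "(2::'F) = 0" by (rule ff_two[OF assms])
  define g where "g i = x ^ (2 ^ i)" for i
  have "trace n x ^ 2 = (\<Sum>i<n. (x ^ (2^i)) ^ 2)" unfolding trace_def by (rule sum_sq_char2[OF two])
  also have "\<dots> = (\<Sum>i<n. g (Suc i))" unfolding g_def by (simp add: power_mult[symmetric] mult.commute)
  also have "\<dots> = (\<Sum>i<n. g i)"
  proof -
    have "g 0 + (\<Sum>i<n. g (Suc i)) = (\<Sum>i<n. g i) + g n"
      by (metis sum.lessThan_Suc sum.lessThan_Suc_shift)
    moreover have "g n = g 0" unfolding g_def using ff_pow_card[of x] assms by simp
    ultimately show ?thesis by simp
  qed
  also have "\<dots> = trace n x" by (simp add: trace_def g_def)
  finally have t2: "trace n x ^ 2 = trace n x" .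
  have "trace n x * (trace n x - 1) = trace n x ^ 2 - trace n x"
    by (simp add: power2_eq_square right_diff_distrib)
  then have "trace n x * (trace n x - 1) = 0" using t2 by simp
  then show ?thesis by simp
qed

lemma trace_nontriv:
  assumes "CARD('F::{field,finite}) = 2 ^ n" "n \<ge> 1"
  shows "\<exists>x::'F. trace n x = 1"
proof (rule ccontr)
  assume "\<not> ?thesis"
  then have z: "\<forall>x::'F. trace n x = 0" using trace_idem[OF assms] by blast
  define p where "p = (\<Sum>i<n. monom (1::'F) (2 ^ i))"
  have ev: "poly p x = trace n x" for x unfolding p_def trace_def by (simp add: poly_sum poly_monom)
  have cf0: "coeff p j = (\<Sum>i<n. if 2 ^ i = j then 1 else 0)" for j
    unfolding p_def by (simp add: coeff_sum coeff_monom)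
  have cf: "coeff p j = (if \<exists>i<n. j = 2 ^ i then 1 else 0)" for j
  proof (cases "\<exists>i<n. j = 2 ^ i")
    case True
    then obtain i0 where i0: "i0 < n" "j = 2 ^ i0" by blast
    have "coeff p j = (\<Sum>i<n. if i = i0 then 1 else 0)"
      unfolding cf0 i0(2) by (intro sum.cong refl) simp
    also have "\<dots> = 1" using i0(1) by (simp add: sum.delta)
    finally show ?thesis using True by simp
  next
    case False
    have "coeff p j = (\<Sum>i<n. 0)"
      unfolding cf0 by (intro sum.cong refl) (use False in auto)
    then show ?thesis using False by simp
  qed
  have "coeff p (2 ^ (n - 1)) = 1" using cf assms(2) by auto
  then have pnz: "p \<noteq> 0" by auto
  have "degree p \<le> 2 ^ (n - 1)"
  proof (rule degree_le, intro allI impI)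
    fix j :: nat assume "2 ^ (n - 1) < j"
    have "j \<noteq> 2 ^ i" if "i < n" for i
    proof -
      have "(2::nat) ^ i \<le> 2 ^ (n - 1)" by (rule power_increasing) (use that in auto)
      then show ?thesis using \<open>2 ^ (n - 1) < j\<close> by linarith
    qed
    then have "\<not> (\<exists>i<n. j = 2 ^ i)" by blast
    then show "coeff p j = 0" using cf by simp
  qed
  moreover have "card {x. poly p x = 0} \<le> degree p" by (rule card_poly_roots_bound[OF pnz])
  moreover have "{x. poly p x = 0} = UNIV" using ev z by auto
  ultimately have "CARD('F) \<le> 2 ^ (n - 1)" by simp
  moreover have "(2::nat) ^ (n - 1) < 2 ^ n" by (rule power_strict_increasing) (use assms(2) in auto)
  ultimately show False using assms(1) by linarith
qed




lemma trace_xor: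
  assumes "CARD('F::{field,finite}) = 2 ^ n" "n \<ge> 1"
  shows "(trace n ((x::'F) + y) = 1) \<longleftrightarrow> (trace n x = 1) \<noteq> (trace n y = 1)"
proof -
  have two: "(2::'F) = 0" by (rule ff_two[OF assms])
  have a: "trace n (x + y) = trace n x + trace n y" by (rule trace_add[OF two])
  have "(1::'F) \<noteq> 0" by simp
  have "(1::'F) + 1 = 0" using two by (metis one_add_one)
  then show ?thesis using a trace_idem[OF assms, of x] trace_idem[OF assms, of y] by auto
qed

lemma fourier:
  fixes C :: "'F::{field,finite} \<Rightarrow> 'K::field_char_0"
  assumes card: "CARD('F) = 2 ^ n" and n1: "n \<ge> 1"
    and H: "\<forall>\<gamma>::'F. \<gamma> \<noteq> 0 \<longrightarrow> (\<forall>t. (\<Sum>b\<in>{b. (trace n (\<gamma> * b) = 1) = t}. C b) = 0)"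
  shows "C b0 = 0"
proof -
  let ?T = "\<lambda>x::'F. trace n x = 1"
  have two: "(2::'F) = 0" by (rule ff_two[OF card n1])
  obtain x0 :: 'F where x0: "trace n x0 = 1" using trace_nontriv[OF card n1] by blast
  define S where "S = (\<Sum>b\<in>UNIV. C b)"
  have sumsplit: "(\<Sum>b\<in>UNIV. C b) = (\<Sum>b\<in>{b. ?T (\<gamma> * b) = True}. C b) + (\<Sum>b\<in>{b. ?T (\<gamma> * b) = False}. C b)" for \<gamma>
  proof -
    have "(\<Sum>b\<in>UNIV. C b) = (\<Sum>b\<in>UNIV. (if ?T (\<gamma> * b) then C b else 0) + (if \<not> ?T (\<gamma> * b) then C b else 0))"
      by (intro sum.cong) auto
    also have "\<dots> = (\<Sum>b\<in>{b. ?T (\<gamma> * b) = True}. C b) + (\<Sum>b\<in>{b. ?T (\<gamma> * b) = False}. C b)"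
      by (simp add: sum.distrib sum.If_cases)
    finally show ?thesis .
  qed
  have S0: "S = 0"
  proof -
    have "(\<Sum>b\<in>{b. ?T (1 * b) = True}. C b) = 0" "(\<Sum>b\<in>{b. ?T (1 * b) = False}. C b) = 0"
      using H[rule_format, of 1 True] H[rule_format, of 1 False] by auto
    then show ?thesis unfolding S_def using sumsplit[of 1] by simp
  qed
  have cnt: "2 * card {\<gamma>::'F. \<not> ?T (\<gamma> * d)} = CARD('F)" if d: "d \<noteq> 0" for d :: 'F
  proof -
    let ?A = "{\<gamma>::'F. ?T (\<gamma> * d)}" and ?B = "{\<gamma>::'F. \<not> ?T (\<gamma> * d)}"
    have sh: "?T ((\<gamma> + x0 / d) * d) \<longleftrightarrow> \<not> ?T (\<gamma> * d)" for \<gamma>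
    proof -
      have "(\<gamma> + x0 / d) * d = \<gamma> * d + x0" using d by (simp add: field_simps)
      then show ?thesis using trace_xor[OF card n1, of "\<gamma> * d" x0] x0 by simp
    qed
    have "bij_betw (\<lambda>\<gamma>. \<gamma> + x0 / d) ?B ?A"
    proof (rule bij_betw_byWitness[of _ "\<lambda>\<gamma>. \<gamma> - x0 / d"])
      show "\<forall>a\<in>?B. a + x0 / d - x0 / d = a" by simp
      show "\<forall>a\<in>?A. a - x0 / d + x0 / d = a" by simp
      show "(\<lambda>\<gamma>. \<gamma> + x0 / d) ` ?B \<subseteq> ?A"
      proof
        fix y assume "y \<in> (\<lambda>\<gamma>. \<gamma> + x0 / d) ` ?B"
        then obtain g where "g \<in> ?B" "y = g + x0 / d" by blast
        then show "y \<in> ?A" using sh[of g] by simp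
      qed
      show "(\<lambda>\<gamma>. \<gamma> - x0 / d) ` ?A \<subseteq> ?B"
      proof
        fix y assume "y \<in> (\<lambda>\<gamma>. \<gamma> - x0 / d) ` ?A"
        then obtain g where g: "g \<in> ?A" "y = g - x0 / d" by blast
        have "g = y + x0 / d" using g by simp
        then show "y \<in> ?B" using sh[of y] g(1) by simp
      qed
    qed
    then have "card ?B = card ?A" by (metis bij_betw_same_card)
    moreover have "card ?A + card ?B = CARD('F)"
      by (subst card_Un_disjoint[symmetric]) (auto intro: arg_cong[where f=card])
    ultimately show ?thesis by simp
  qed
  obtain h where h: "2 * h = CARD('F)" using cnt[of 1] by auto
  have hpos: "h > 0" using h card by (metis gr0I mult_0_right power_not_zero zero_neq_numeral)
  define L where "L = (\<Sum>\<gamma>\<in>UNIV. \<Sum>b\<in>UNIV. if ?T (\<gamma> * b) = ?T (\<gamma> * b0) then C b else 0)"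
  have L1: "L = S"
  proof -
    have inner: "(\<Sum>b\<in>UNIV. if ?T (\<gamma> * b) = ?T (\<gamma> * b0) then C b else 0) = (if \<gamma> = 0 then S else 0)" for \<gamma>
    proof (cases "\<gamma> = 0")
      case True then show ?thesis by (simp add: S_def)
    next
      case False
      have "(\<Sum>b\<in>UNIV. if ?T (\<gamma> * b) = ?T (\<gamma> * b0) then C b else 0) = (\<Sum>b\<in>{b. ?T (\<gamma> * b) = ?T (\<gamma> * b0)}. C b)"
        by (simp add: sum.If_cases Int_def)
      also have "\<dots> = 0" using H False by blast
      finally show ?thesis using False by simp
    qed
    show ?thesis
      unfolding L_def inner by (simp add: sum.delta)
  qed
  have L2: "L = (\<Sum>b\<in>UNIV. C b * of_nat (card {\<gamma>. ?T (\<gamma> * b) = ?T (\<gamma> * b0)}))"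
  proof -
    have "L = (\<Sum>b\<in>UNIV. \<Sum>\<gamma>\<in>UNIV. if ?T (\<gamma> * b) = ?T (\<gamma> * b0) then C b else 0)"
      unfolding L_def by (rule sum.swap)
    also have "\<dots> = (\<Sum>b\<in>UNIV. C b * of_nat (card {\<gamma>. ?T (\<gamma> * b) = ?T (\<gamma> * b0)}))"
      by (rule sum.cong[OF refl]) (simp add: sum.If_cases Int_def)
    finally show ?thesis .
  qed
  have cardb: "card {\<gamma>. ?T (\<gamma> * b) = ?T (\<gamma> * b0)} = (if b = b0 then 2 * h else h)" for b
  proof (cases "b = b0")
    case True then show ?thesis using h by simp
  next
    case False
    have "{\<gamma>. ?T (\<gamma> * b) = ?T (\<gamma> * b0)} = {\<gamma>. \<not> ?T (\<gamma> * (b - b0))}"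
    proof -
      have "?T (\<gamma> * b) \<longleftrightarrow> ?T (\<gamma> * (b - b0)) \<noteq> ?T (\<gamma> * b0)" for \<gamma>
        using trace_xor[OF card n1, of "\<gamma> * (b - b0)" "\<gamma> * b0"] by (simp add: algebra_simps)
      then show ?thesis by auto
    qed
    then show ?thesis using cnt[of "b - b0"] False h by simp
  qed
  have "L = (\<Sum>b\<in>UNIV. C b * of_nat h) + C b0 * of_nat h"
  proof -
    have "L = (\<Sum>b\<in>UNIV. C b * of_nat h + (if b = b0 then C b0 * of_nat h else 0))"
      unfolding L2 cardb by (rule sum.cong[OF refl]) (simp add: algebra_simps)
    also have "\<dots> = (\<Sum>b\<in>UNIV. C b * of_nat h) + C b0 * of_nat h"
      by (simp add: sum.distrib)
    finally show ?thesis .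
  qed
  also have "(\<Sum>b\<in>UNIV. C b * of_nat h) = S * of_nat h" unfolding S_def by (simp add: sum_distrib_right)
  finally have "C b0 * of_nat h = 0" using L1 S0 by simp
  then show ?thesis using hpos by simp
qed




definition pp :: "(bool list \<Rightarrow> bool list) \<Rightarrow> bool" where
  "pp h \<longleftrightarrow> (\<forall>x. length (h x) = length x) \<and> (\<forall>x y. take (length x) (h (x @ y)) = h x)"

lemma flipA_len[simp]: "length (flipA x) = length x"
  by (cases x) auto

lemma flipA_take: "take (length x) (flipA (x @ y)) = flipA x"
  by (cases x) auto

lemma flipA_flipA[simp]: "flipA (flipA x) = x"
  by (cases x) auto

lemma iota_len[simp]: "length (iota n al b x) = length x"
  by (induction n al b x rule: iota.induct) auto

lemma iota_take: "take (length x) (iota n al b (x @ y)) = iota n al b x"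
proof (induction x arbitrary: b)
  case Nil then show ?case by simp
next
  case (Cons a x)
  then show ?case by (cases a) (auto simp: flipA_take)
qed

lemma iota_invol: "iota n al b (iota n al b x) = x"
proof (induction x arbitrary: b)
  case Nil then show ?case by simp
next
  case (Cons a x)
  then show ?case by (cases a) auto
qed

lemma inv_iota: "inv (iota n al b) = iota n al b"
  by (rule inv_unique_comp) (auto simp: fun_eq_iff iota_invol)

lemma pp_comp: "pp f \<Longrightarrow> pp g \<Longrightarrow> pp (f \<circ> g)"
  unfolding pp_def
proof (intro conjI allI; clarsimp)
  fix x y
  assume f1: "\<forall>x. length (f x) = length x" and f2: "\<forall>x y. take (length x) (f (x @ y)) = f x"
    and g1: "\<forall>x. length (g x) = length x" and g2: "\<forall>x y. take (length x) (g (x @ y)) = g x"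
  have "g (x @ y) = g x @ drop (length x) (g (x @ y))"
    using g2 by (metis append_take_drop_id)
  then have "f (g (x @ y)) = f (g x @ drop (length x) (g (x @ y)))" by simp
  then show "take (length x) (f (g (x @ y))) = f (g x)"
    using f2 g1 by metis
qed

lemma pp_flipA: "pp flipA"
  unfolding pp_def by (simp add: flipA_take)

lemma pp_iota: "pp (iota n al b)"
  unfolding pp_def by (simp add: iota_take)

lemma pp_TG: "g \<in> TG n al \<Longrightarrow> pp g"
proof (induction rule: TG.induct)
  case TG_id then show ?case by (simp add: pp_def)
next
  case (TG_a g) then show ?case by (intro pp_comp pp_flipA)
next
  case (TG_iota g b) then show ?case by (intro pp_comp pp_iota)
next
  case (TG_iota_inv g b) then show ?case unfolding inv_iota by (intro pp_comp pp_iota)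
qed

lemma iota_TG: "iota n al b \<in> TG n al"
  using TG_iota[OF TG_id, of n al b] by simp

lemma pp_split: "pp g \<Longrightarrow> g (x @ y) = g x @ restr g x y"
  unfolding pp_def restr_def by (metis append_take_drop_id)

lemma restr_restr: "restr (restr g x) u = restr g (x @ u)"
  by (simp add: restr_def fun_eq_iff add.commute)

lemma iota_pref:
  "iota n al b (replicate k True @ False # v) =
     replicate k True @ False # (if trace n (al ^ k * b) = 1 then flipA v else v)"
proof (induction k arbitrary: b)
  case 0 then show ?case by simp
next
  case (Suc k)
  then show ?case by (simp add: mult.assoc mult.left_commute)
qed

lemma cyl_pref: "w \<in> cyl \<epsilon> \<Longrightarrow> pref w (length \<epsilon>) = \<epsilon>"
  unfolding cyl_def pref_def by (intro nth_equalityI) auto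

lemma in_cyl_pref[simp]: "w \<in> cyl (pref w L)"
  unfolding cyl_def pref_def by simp

lemma length_pref[simp]: "length (pref w L) = L"
  unfolding pref_def by simp

lemma take_pref: "j \<le> L \<Longrightarrow> take j (pref w L) = pref w j"
  unfolding pref_def by (simp add: take_map)

lemma pref_split: "j \<le> L \<Longrightarrow> pref w L = pref w j @ drop j (pref w L)"
  using take_pref[of j L w] by (metis append_take_drop_id)

lemma cyl_Nil[simp]: "cyl [] = UNIV"
  unfolding cyl_def by simp

definition pk :: "nat \<Rightarrow> bool list" where
  "pk k = replicate k True @ [False]"

lemma length_pk[simp]: "length (pk k) = Suc k"
  by (simp add: pk_def)

lemma iota_pk: "iota n al b (pk k @ v) = pk k @ (if trace n (al ^ k * b) = 1 then flipA v else v)"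
  using iota_pref[of n al b k v] by (simp add: pk_def)

lemma germ_self: "g \<in> TG n al \<Longrightarrow> w \<in> cyl \<mu> \<Longrightarrow> ((\<eta>, g, \<mu>), w) \<in> germ n al (\<eta>, g, \<mu>) w"
  unfolding germ_def germ_rel_def by (auto intro!: exI[of _ "[]"])

lemma germ_snd: "q \<in> germ n al s w \<Longrightarrow> snd q = w"
  unfolding germ_def germ_rel_def by (auto split: prod.splits)

lemma pref_pk:
  assumes "w \<in> cyl (pk k)" "Suc k \<le> L"
  shows "pref w L = pk k @ drop (Suc k) (pref w L)"
  using pref_split[OF assms(2), of w] cyl_pref[OF assms(1)] by simp

lemma germ_sub:
  assumes T: "(trace n (al ^ k * b) = 1) = (trace n (al ^ k * b0) = 1)"
    and w: "w \<in> cyl (pk k)"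
  shows "germ n al ([], iota n al b0, []) w \<subseteq> germ n al ([], iota n al b, []) w"
proof
  fix q assume q: "q \<in> germ n al ([], iota n al b0, []) w"
  obtain \<eta>' g' \<mu>' w' where qd: "q = ((\<eta>', g', \<mu>'), w')" by (metis prod.exhaust)
  from q qd have g': "g' \<in> TG n al" and rel: "germ_rel (([], iota n al b0, []), w) q"
    unfolding germ_def by auto
  from rel qd obtain \<epsilon> \<epsilon>' where ww: "w = w'" "w' \<in> cyl \<mu>'"
    and e1: "\<epsilon> = \<mu>' @ \<epsilon>'" and e2: "w \<in> cyl \<epsilon>"
    and e3: "iota n al b0 \<epsilon> = \<eta>' @ g' \<epsilon>'" and e4: "restr (iota n al b0) \<epsilon> = restr g' \<epsilon>'"
    unfolding germ_rel_def by auto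
  define L where "L = max (length \<epsilon>) (Suc k)"
  define \<epsilon>1 where "\<epsilon>1 = pref w L"
  define u where "u = drop (length \<epsilon>) \<epsilon>1"
  have e1u: "\<epsilon>1 = \<epsilon> @ u"
    unfolding \<epsilon>1_def u_def using pref_split[of "length \<epsilon>" L w] cyl_pref[OF e2] L_def by simp
  have agree: "iota n al b (pk k @ v) = iota n al b0 (pk k @ v)" for v
    using T by (simp add: iota_pk)
  have epk: "\<epsilon>1 = pk k @ drop (Suc k) \<epsilon>1"
    unfolding \<epsilon>1_def using pref_pk[OF w, of L] L_def by simp
  have A1: "iota n al b \<epsilon>1 = iota n al b0 \<epsilon>1"
    using agree epk by metis
  have A2: "restr (iota n al b) \<epsilon>1 = restr (iota n al b0) \<epsilon>1"
  proof
    fix v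
    have "iota n al b (\<epsilon>1 @ v) = iota n al b0 (\<epsilon>1 @ v)"
      using agree[of "drop (Suc k) \<epsilon>1 @ v"] epk by (metis append.assoc)
    then show "restr (iota n al b) \<epsilon>1 v = restr (iota n al b0) \<epsilon>1 v"
      unfolding restr_def by simp
  qed
  have ppg: "pp g'" by (rule pp_TG[OF g'])
  have B1: "iota n al b \<epsilon>1 = \<eta>' @ g' (\<epsilon>' @ u)"
    using A1 e1u pp_split[OF pp_iota, of n al b0 \<epsilon> u] e3 e4 pp_split[OF ppg, of \<epsilon>' u] by simp
  have B2: "restr (iota n al b) \<epsilon>1 = restr g' (\<epsilon>' @ u)"
    using A2 e1u e4 restr_restr by metis
  have wc: "w' \<in> cyl (\<mu>' @ \<epsilon>' @ u)"
    using e1u e1 ww(1) in_cyl_pref[of w L] unfolding \<epsilon>1_def by simp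
  have "germ_rel (([], iota n al b, []), w) q"
    unfolding qd germ_rel_def
    using ww e1 e1u B1 B2 wc by (auto intro!: exI[of _ \<epsilon>1] exI[of _ "\<epsilon>' @ u"] simp: \<epsilon>1_def)
  then show "q \<in> germ n al ([], iota n al b, []) w"
    using g' qd unfolding germ_def by auto
qed

lemma germ_eq:
  assumes "(trace n (al ^ k * b) = 1) = (trace n (al ^ k * b0) = 1)"
    and "w \<in> cyl (pk k)"
  shows "germ n al ([], iota n al b0, []) w = germ n al ([], iota n al b, []) w"
  using germ_sub[OF assms] germ_sub[OF assms(1)[symmetric] assms(2)] by blast

lemma germ_neq:
  assumes T: "(trace n (al ^ k * b) = 1) \<noteq> (trace n (al ^ k * b0) = 1)"
    and w: "w \<in> cyl (pk k)"
  shows "(([], iota n al b0, []), w) \<notin> germ n al ([], iota n al b, []) w"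
proof
  assume "(([], iota n al b0, []), w) \<in> germ n al ([], iota n al b, []) w"
  then obtain \<epsilon> where e2: "w \<in> cyl \<epsilon>"
    and e3: "iota n al b \<epsilon> = iota n al b0 \<epsilon>" and e4: "restr (iota n al b) \<epsilon> = restr (iota n al b0) \<epsilon>"
    unfolding germ_def germ_rel_def by auto
  define L where "L = max (length \<epsilon>) (Suc (Suc k))"
  define z where "z = pref w L"
  define u where "u = drop (length \<epsilon>) z"
  have ezu: "z = \<epsilon> @ u"
    unfolding z_def u_def using pref_split[of "length \<epsilon>" L w] cyl_pref[OF e2] L_def by simp
  have "iota n al b z = iota n al b0 z"
    using ezu pp_split[OF pp_iota, of n al b \<epsilon> u] pp_split[OF pp_iota, of n al b0 \<epsilon> u] e3 e4 by simp
  moreover have zpk: "z = pk k @ drop (Suc k) z"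
    unfolding z_def using pref_pk[OF w, of L] L_def by simp
  moreover have "drop (Suc k) z \<noteq> []"
    unfolding z_def L_def by simp
  then obtain x v where "drop (Suc k) z = x # v" by (cases "drop (Suc k) z") auto
  ultimately have "iota n al b (pk k @ x # v) = iota n al b0 (pk k @ x # v)" by metis
  then show False using T by (simp add: iota_pk split: if_splits)
qed




lemma al_nonzero:
  fixes al :: "'F::{field,finite}"
  assumes "CARD('F) = 2 ^ n" "n \<ge> 2"
    and gen: "\<forall>x::'F. x \<noteq> 0 \<longrightarrow> (\<exists>k::nat. x = al ^ k)"
  shows "al \<noteq> 0"
proof
  assume a0: "al = 0"
  have lt: "card {0::'F, 1} < CARD('F)"
  proof -
    have "card {0::'F, 1} \<le> 2" by (simp add: card_insert_le_m1)
    moreover have "(4::nat) \<le> 2 ^ n"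
      using power_increasing[of 2 n "2::nat"] assms(2) by simp
    ultimately show ?thesis using assms(1) by linarith
  qed
  have "\<not> (UNIV \<subseteq> {0::'F, 1})"
  proof
    assume "UNIV \<subseteq> {0::'F, 1}"
    then have "CARD('F) \<le> card {0::'F, 1}" by (intro card_mono) auto
    with lt show False by simp
  qed
  then obtain x :: 'F where x: "x \<notin> {0, 1}" by blast
  then obtain k where "x = al ^ k" using gen by auto
  then show False using x a0 by (cases k) auto
qed

lemma al_pow:
  fixes al :: "'F::{field,finite}"
  assumes card: "CARD('F) = 2 ^ n" and n2: "n \<ge> 2"
    and gen: "\<forall>x::'F. x \<noteq> 0 \<longrightarrow> (\<exists>k::nat. x = al ^ k)"
    and g: "\<gamma> \<noteq> 0"
  shows "\<exists>k\<ge>m. \<gamma> = al ^ k"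
proof -
  have a0: "al \<noteq> 0" by (rule al_nonzero[OF card n2 gen])
  obtain j where j: "\<gamma> = al ^ j" using gen g by auto
  define N where "N = CARD('F) - 1"
  have cN: "CARD('F) = Suc N" unfolding N_def using card by simp
  have "al * al ^ N = al" using ff_pow_card[of al] cN by simp
  then have aN: "al ^ N = 1" using a0 by simp
  have p4: "(4::nat) \<le> 2 ^ n" using power_increasing[of 2 n "2::nat"] n2 by simp
  have N1: "N \<ge> 1" unfolding N_def using card p4 by linarith
  have amN: "al ^ (m * N) = 1" by (metis aN mult.commute power_mult power_one)
  have "al ^ (j + m * N) = \<gamma>" using j amN by (simp add: power_add)
  moreover have "j + m * N \<ge> m" using N1 by (metis le_add2 mult_le_mono order_trans mult_1_right le_refl)
  ultimately show ?thesis by metis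
qed

lemma iota_inj:
  fixes al :: "'F::{field,finite}"
  assumes card: "CARD('F) = 2 ^ n" and n2: "n \<ge> 2"
    and gen: "\<forall>x::'F. x \<noteq> 0 \<longrightarrow> (\<exists>k::nat. x = al ^ k)"
  shows "inj (iota n al)"
proof
  fix b b' :: 'F
  assume eq: "iota n al b = iota n al b'"
  show "b = b'"
  proof (rule ccontr)
    assume ne: "b \<noteq> b'"
    have n1: "n \<ge> 1" using n2 by simp
    obtain x0 :: 'F where x0: "trace n x0 = 1" using trace_nontriv[OF card n1] by blast
    have "x0 \<noteq> 0" using x0 by (auto simp: trace_def power_0_left)
    then have "x0 / (b - b') \<noteq> 0" using ne by simp
    then obtain k where k: "x0 / (b - b') = al ^ k" using gen by blast
    have "al ^ k * b = al ^ k * (b - b') + al ^ k * b'" by (simp add: algebra_simps)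
    moreover have "al ^ k * (b - b') = x0" using k ne by (simp add: field_simps)
    ultimately have "(trace n (al ^ k * b) = 1) \<longleftrightarrow> (trace n x0 = 1) \<noteq> (trace n (al ^ k * b') = 1)"
      using trace_xor[OF card n1] by metis
    then have "(trace n (al ^ k * b) = 1) \<noteq> (trace n (al ^ k * b') = 1)" using x0 by simp
    then have "iota n al b (pk k @ [False]) \<noteq> iota n al b' (pk k @ [False])"
      by (auto simp: iota_pk)
    then show False using eq by simp
  qed
qed

lemma cyl_pk_rep:
  assumes w: "w \<in> cyl (pk k)" and mk: "m \<le> k"
  shows "w \<in> cyl (replicate m True)"
proof -
  have "w i" if i: "i < m" for i
  proof -
    have ik: "i < k" using i mk by simp
    have "w i = (replicate k True @ [False]) ! i" using w ik unfolding cyl_def pk_def by simp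
    then show ?thesis using ik by (simp add: nth_append)
  qed
  then show ?thesis unfolding cyl_def by simp
qed

lemma mem_U:
  assumes mk: "m \<le> k" and w: "w \<in> cyl (pk k)"
  shows "germ n al ([], iota n al b0, []) w \<in> Uset n al m (iota n al b) \<longleftrightarrow>
         (trace n (al ^ k * b) = 1) = (trace n (al ^ k * b0) = 1)"
proof
  assume T: "(trace n (al ^ k * b) = 1) = (trace n (al ^ k * b0) = 1)"
  have "germ n al ([], iota n al b0, []) w = germ n al ([], iota n al b, []) w"
    by (rule germ_eq[OF T w])
  moreover have "w \<in> cyl (replicate m True)" by (rule cyl_pk_rep[OF w mk])
  ultimately show "germ n al ([], iota n al b0, []) w \<in> Uset n al m (iota n al b)"
    unfolding Uset_def Theta_def by auto
next
  assume "germ n al ([], iota n al b0, []) w \<in> Uset n al m (iota n al b)"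
  then obtain w' where eq: "germ n al ([], iota n al b0, []) w = germ n al ([], iota n al b, []) w'"
    unfolding Uset_def Theta_def by auto
  have "(([], iota n al b0, []), w) \<in> germ n al ([], iota n al b0, []) w"
    by (rule germ_self[OF iota_TG]) simp
  then have mem: "(([], iota n al b0, []), w) \<in> germ n al ([], iota n al b, []) w'" using eq by simp
  then have "w = w'" using germ_snd by fastforce
  then show "(trace n (al ^ k * b) = 1) = (trace n (al ^ k * b0) = 1)"
    using mem germ_neq[OF _ w, of n al b b0] by blast
qed

theorem mainTheorem6:
  fixes al :: "'F::{field,finite}" and n m :: nat
    and c :: "(bool list \<Rightarrow> bool list) \<Rightarrow> 'K::field_char_0"
  assumes "n \<ge> 2"
    and "CARD('F) = 2 ^ n"
    and "\<forall>x::'F. x \<noteq> 0 \<longrightarrow> (\<exists>k::nat. x = al ^ k)"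
  defines "f \<equiv> (\<lambda>x. \<Sum>g\<in>N0 n al. c g * indicator (Uset n al m g) x)"
  shows "singular n al f \<longleftrightarrow> f = (\<lambda>_. 0)"
proof
  assume sing: "singular n al f"
  note n2 = assms(1) and card = assms(2) and gen = assms(3)
  define C where "C b = c (iota n al b)" for b
  have n1: "n \<ge> 1" using n2 by simp
  have inj: "inj (iota n al)" by (rule iota_inj[OF card n2 gen])
  have fx: "f (germ n al ([], iota n al b0, []) w) =
      (\<Sum>b\<in>{b. (trace n (al ^ k * b) = 1) = (trace n (al ^ k * b0) = 1)}. C b)"
    if mk: "m \<le> k" and w: "w \<in> cyl (pk k)" for k b0 w
  proof -
    let ?x = "germ n al ([], iota n al b0, []) w"
    have "f ?x = (\<Sum>b\<in>UNIV. c (iota n al b) * indicator (Uset n al m (iota n al b)) ?x)"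
      unfolding f_def N0_def by (simp add: sum.reindex[OF inj])
    also have "\<dots> = (\<Sum>b\<in>UNIV. if (trace n (al ^ k * b) = 1) = (trace n (al ^ k * b0) = 1) then C b else 0)"
      by (rule sum.cong[OF refl]) (simp add: indicator_def mem_U[OF mk w] C_def)
    also have "\<dots> = (\<Sum>b\<in>{b. (trace n (al ^ k * b) = 1) = (trace n (al ^ k * b0) = 1)}. C b)"
      by (simp add: sum.If_cases Int_def)
    finally show ?thesis .
  qed
  have H: "\<forall>\<gamma>::'F. \<gamma> \<noteq> 0 \<longrightarrow> (\<forall>t. (\<Sum>b\<in>{b. (trace n (\<gamma> * b) = 1) = t}. C b) = 0)"
  proof (intro allI impI)
    fix \<gamma> :: 'F and t assume g0: "\<gamma> \<noteq> 0"
    show "(\<Sum>b\<in>{b. (trace n (\<gamma> * b) = 1) = t}. C b) = 0"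
    proof (rule ccontr)
      assume ne: "(\<Sum>b\<in>{b. (trace n (\<gamma> * b) = 1) = t}. C b) \<noteq> 0"
      obtain k where mk: "m \<le> k" and gk: "\<gamma> = al ^ k" using al_pow[OF card n2 gen g0, of m] by blast
      have "{b. (trace n (\<gamma> * b) = 1) = t} \<noteq> {}" using ne by (metis sum.empty)
      then obtain b0 where b0: "(trace n (\<gamma> * b0) = 1) = t" by blast
      define OS where "OS = Theta n al ([], iota n al b0, []) (cyl (pk k))"
      have co: "cantor_open (cyl (pk k))"
        unfolding cantor_open_def by (metis cyl_pref order_refl)
      have Ob: "OS \<in> basic_bisections n al"
        unfolding basic_bisections_def OS_def using iota_TG co by fastforce
      have op: "openin (germ_top n al) OS"
        unfolding germ_top_def by (rule topology_generated_by_Basis[OF Ob])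
      have sub: "OS \<subseteq> {x \<in> topspace (germ_top n al). f x \<noteq> 0}"
      proof
        fix x assume xO: "x \<in> OS"
        then obtain w where w: "w \<in> cyl (pk k)" and xw: "x = germ n al ([], iota n al b0, []) w"
          unfolding OS_def Theta_def by auto
        have "x \<in> topspace (germ_top n al)" using xO Ob unfolding germ_top_def by auto
        moreover have "f x \<noteq> 0" using fx[OF mk w, of b0] ne b0 gk xw by simp
        ultimately show "x \<in> {x \<in> topspace (germ_top n al). f x \<noteq> 0}" by simp
      qed
      have "OS \<subseteq> {}" using interior_of_maximal[OF sub op] sing unfolding singular_def by simp
      moreover have "(\<lambda>i. i < k) \<in> cyl (pk k)" by (auto simp: cyl_def pk_def nth_append)
      ultimately show False unfolding OS_def Theta_def by auto
    qed
  qed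
  have C0: "C b = 0" for b by (rule fourier[OF card n1 H])
  show "f = (\<lambda>_. 0)"
    unfolding f_def N0_def using C0 by (auto simp: C_def intro!: sum.neutral)
next
  assume "f = (\<lambda>_. 0)"
  then show "singular n al f" unfolding singular_def by simp
qed


end
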